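(* The semirings $\mathbb{R}_{\min}$ and $\mathbb{R}_{\max}$ are fully elementary. Their symmetrizations $\tilde{\mathcal{S}}(\mathbb{R}_{\min})$ and $\tilde{\mathcal{S}}(\mathbb{R}_{\max})$ are not fully elementary.
   Context: $\mathbb{R}_{\min}=\mathbb{R}\cup\{+\infty\}$ with addition $\min$ (zero $+\infty$) and multiplication the usual $+$ (unit $0$); $\mathbb{R}_{\max}=\mathbb{R}\cup\{-\infty\}$ with addition $\max$ and multiplication $+$. For a semiring $X$, $\mathcal{S}(X)=X\times X$ with $(a',a'')+(b',b'')=(a'+b',a''+b'')$ and $(a',a'')\cdot(b',b'')=(a'b'+a''b'',a'b''+a''b')$. The relation $\sim$ on $\mathcal{S}(X)$ is: $(a',a'')\sim(b',b'')$ iff $(a',a'')=(b',b'')$, or ($a'\ne a''$, $b'\ne b''$ and $a'+b''=a''+b'$). When $\sim$ is a congruence, the symmetrization is the quotient semiring $\tilde{\mathcal{S}}(X)=\mathcal{S}(X)/\sim$. Polynomials over a unital commutative semiring $X$ in $n$ variables are functions $X^n\to X$ represented by formal expressions $\sum_k a_k\prod_j x_j^{d_{k,j}}$; a polynomial is symmetric if represented by an expression closed (with coefficients) under permuting variables. $e_j$ is the sum of all products of $j$ distinct variables. $X$ is fully elementary if for every $n$ every symmetric polynomial $p$ in $n$ variables equals $r(e_1,\dots,e_n)$ as functions on $X^n$ for some polynomial $r$. *)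

theory Defs
  imports Complex_Main "HOL-Library.Extended_Real" "HOL-Library.Multiset"
    "HOL-Combinatorics.Permutations"
begin

record 'a srng =
  car  :: "'a set"
  sadd :: "'a \<Rightarrow> 'a \<Rightarrow> 'a"
  smul :: "'a \<Rightarrow> 'a \<Rightarrow> 'a"
  szero :: 'a
  sone :: 'a

definition Rmin :: "ereal srng" where
  "Rmin = \<lparr>car = {x. x \<noteq> -\<infinity>}, sadd = min, smul = (+), szero = \<infinity>, sone = 0\<rparr>"

definition Rmax :: "ereal srng" where
  "Rmax = \<lparr>car = {x. x \<noteq> \<infinity>}, sadd = max, smul = (+), szero = -\<infinity>, sone = 0\<rparr>"

definition Ssym :: "'a srng \<Rightarrow> ('a \<times> 'a) srng" where
  "Ssym X = \<lparr>car = car X \<times> car X,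
     sadd = (\<lambda>(a1,a2) (b1,b2). (sadd X a1 b1, sadd X a2 b2)),
     smul = (\<lambda>(a1,a2) (b1,b2). (sadd X (smul X a1 b1) (smul X a2 b2),
                                 sadd X (smul X a1 b2) (smul X a2 b1))),
     szero = (szero X, szero X),
     sone = (sone X, szero X)\<rparr>"

definition sim_rel :: "'a srng \<Rightarrow> (('a \<times> 'a) \<times> ('a \<times> 'a)) set" where
  "sim_rel X = {(a, b). a \<in> car X \<times> car X \<and> b \<in> car X \<times> car X \<and>
      (a = b \<or> (fst a \<noteq> snd a \<and> fst b \<noteq> snd b \<and>
                sadd X (fst a) (snd b) = sadd X (snd a) (fst b)))}"

text \<open>The symmetrization: quotient of S(X) by ~ (operations via representatives;
  meaningful when ~ is a congruence).\<close>
definition Symz :: "'a srng \<Rightarrow> ('a \<times> 'a) set srng" where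
  "Symz X = \<lparr>car = car (Ssym X) // sim_rel X,
     sadd = (\<lambda>A B. sim_rel X `` {sadd (Ssym X) (SOME a. a \<in> A) (SOME b. b \<in> B)}),
     smul = (\<lambda>A B. sim_rel X `` {smul (Ssym X) (SOME a. a \<in> A) (SOME b. b \<in> B)}),
     szero = sim_rel X `` {szero (Ssym X)},
     sone = sim_rel X `` {sone (Ssym X)}\<rparr>"

text \<open>Formal polynomial expressions in n variables: lists of terms (coefficient,
  exponent vector of length n), representing sum_k a_k prod_j x_j^(d_kj).\<close>
type_synonym 'a fpoly = "('a \<times> nat list) list"

definition spow :: "'a srng \<Rightarrow> 'a \<Rightarrow> nat \<Rightarrow> 'a" where
  "spow R a k = (smul R a ^^ k) (sone R)"

definition mono_eval :: "'a srng \<Rightarrow> nat list \<Rightarrow> 'a list \<Rightarrow> 'a" where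
  "mono_eval R d x = foldr (smul R) (map2 (\<lambda>di xi. spow R xi di) d x) (sone R)"

definition poly_eval :: "'a srng \<Rightarrow> 'a fpoly \<Rightarrow> 'a list \<Rightarrow> 'a" where
  "poly_eval R p x = foldr (sadd R) (map (\<lambda>(c, d). smul R c (mono_eval R d x)) p) (szero R)"

definition is_fpoly :: "'a srng \<Rightarrow> nat \<Rightarrow> 'a fpoly \<Rightarrow> bool" where
  "is_fpoly R n p \<longleftrightarrow> (\<forall>(c, d) \<in> set p. c \<in> car R \<and> length d = n)"

definition perm_exp :: "nat \<Rightarrow> (nat \<Rightarrow> nat) \<Rightarrow> nat list \<Rightarrow> nat list" where
  "perm_exp n \<sigma> d = map (\<lambda>j. d ! \<sigma> j) [0..<n]"

definition sym_fpoly :: "'a srng \<Rightarrow> nat \<Rightarrow> 'a fpoly \<Rightarrow> bool" where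
  "sym_fpoly R n p \<longleftrightarrow> is_fpoly R n p \<and>
     (\<forall>\<sigma>. \<sigma> permutes {..<n} \<longrightarrow>
        mset (map (\<lambda>(c, d). (c, perm_exp n \<sigma> d)) p) = mset p)"

definition elem_sym :: "'a srng \<Rightarrow> nat \<Rightarrow> nat \<Rightarrow> 'a list \<Rightarrow> 'a" where
  "elem_sym R n j x = foldr (sadd R)
     (map (\<lambda>l. foldr (smul R) (map (\<lambda>i. x ! i) l) (sone R))
          (filter (\<lambda>l. length l = j) (subseqs [0..<n]))) (szero R)"

definition fully_elementary :: "'a srng \<Rightarrow> bool" where
  "fully_elementary R \<longleftrightarrow>
    (\<forall>n p. sym_fpoly R n p \<longrightarrow>
       (\<exists>r. is_fpoly R n r \<and>
          (\<forall>x. length x = n \<and> set x \<subseteq> car R \<longrightarrow>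
             poly_eval R p x = poly_eval R r (map (\<lambda>j. elem_sym R n (Suc j) x) [0..<n]))))"

end

theory Submission
  imports Defs
begin


lemma foldr_min_Inf: "foldr min l (\<infinity>::ereal) = Inf (set l)"
  by (induction l) (auto simp: inf_min top_ereal_def)

lemma Rmin_simps[simp]: "sadd Rmin = min" "smul Rmin = (+)" "szero Rmin = \<infinity>" "sone Rmin = 0"
   "car Rmin = {x. x \<noteq> -\<infinity>}"
  by (simp_all add: Rmin_def)

lemma spow_Rmin: "spow Rmin a k = (\<Sum>t<k. a)"
  by (induction k) (simp_all add: spow_def Rmin_def add.commute)

lemma mono_Rmin: "length d = length x \<Longrightarrow>
   mono_eval Rmin d x = (\<Sum>i<length x. \<Sum>t<d!i. x!i)"
proof (induction d x rule: list_induct2)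
  case Nil then show ?case by (simp add: mono_eval_def Rmin_def)
next
  case (Cons a d b x)
  have "mono_eval Rmin (a#d) (b#x) = spow Rmin b a + mono_eval Rmin d x"
    by (simp add: mono_eval_def Rmin_def)
  also have "\<dots> = (\<Sum>i<length (b#x). \<Sum>t<(a#d)!i. (b#x)!i)"
    using Cons by (simp only: length_Cons sum.lessThan_Suc_shift) (simp add: spow_Rmin)
  finally show ?case .
qed

lemma poly_Rmin: "poly_eval Rmin p x = Inf ((\<lambda>(c,d). c + mono_eval Rmin d x) ` set p)"
  by (simp add: poly_eval_def foldr_min_Inf image_image)

lemma elem_Rmin: "elem_sym Rmin n m x =
   Inf ((\<lambda>A. \<Sum>i\<in>A. x!i) ` {A. A \<subseteq> {..<n} \<and> card A = m})"
proof -
  let ?g = "\<lambda>l. foldr (+) (map (\<lambda>i. x ! i) l) (0::ereal)"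
  have e: "elem_sym Rmin n m x = Inf (?g ` {l \<in> set (subseqs [0..<n]). length l = m})"
    by (simp add: elem_sym_def Rmin_def foldr_min_Inf)
  have "?g ` {l \<in> set (subseqs [0..<n]). length l = m} =
        (\<lambda>A. \<Sum>i\<in>A. x!i) ` {A. A \<subseteq> {..<n} \<and> card A = m}"
  proof (intro equalityI subsetI)
    fix y assume "y \<in> ?g ` {l \<in> set (subseqs [0..<n]). length l = m}"
    then obtain l where l: "l \<in> set (subseqs [0..<n])" "length l = m" "y = ?g l" by auto
    have dl: "distinct l" using subseqs_distinctD[OF l(1)] by simp
    have "set l \<in> set ` set (subseqs [0..<n])" using l(1) by blast
    then have sl: "set l \<subseteq> {..<n}" by (auto simp: subseqs_powset)
    have "y = (\<Sum>i\<in>set l. x!i)"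
      using l(3) dl by (simp add: sum_list.eq_foldr[symmetric] sum_list_distinct_conv_sum_set)
    moreover have "card (set l) = m" using dl l(2) by (simp add: distinct_card)
    ultimately show "y \<in> (\<lambda>A. \<Sum>i\<in>A. x!i) ` {A. A \<subseteq> {..<n} \<and> card A = m}"
      using sl by blast
  next
    fix y assume "y \<in> (\<lambda>A. \<Sum>i\<in>A. x!i) ` {A. A \<subseteq> {..<n} \<and> card A = m}"
    then obtain A where A: "A \<subseteq> {..<n}" "card A = m" "y = (\<Sum>i\<in>A. x!i)" by auto
    have "A \<in> set ` set (subseqs [0..<n])" using A(1) subset_subseqs[of A "[0..<n]"] by (simp add: lessThan_atLeast0)
    then obtain l where l: "l \<in> set (subseqs [0..<n])" "set l = A" by auto
    have dl: "distinct l" using subseqs_distinctD[OF l(1)] by simp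
    have "length l = m" using dl l(2) A(2) by (simp add: distinct_card[symmetric])
    moreover have "y = ?g l"
      using A(3) dl l(2) by (simp add: sum_list.eq_foldr[symmetric] sum_list_distinct_conv_sum_set)
    ultimately show "y \<in> ?g ` {l \<in> set (subseqs [0..<n]). length l = m}" using l(1) by blast
  qed
  then show ?thesis using e by simp
qed

lemma elem_Rmin_0: "elem_sym Rmin n 0 x = 0"
proof -
  have "{A. A \<subseteq> {..<n} \<and> card A = 0} = {{}}"
    by (auto dest: finite_subset[of _ "{..<n}"])
  then show ?thesis by (simp add: elem_Rmin)
qed

lemma exch:
  fixes x :: "ereal list"
  assumes "A \<subseteq> {..<n}" "B \<subseteq> {..<n}" "card A = card B"
    and ord: "\<forall>i\<in>B. \<forall>j\<in>{..<n}-B. x!i \<le> x!j"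
  shows "(\<Sum>i\<in>B. x!i) \<le> (\<Sum>i\<in>A. x!i)"
proof -
  have fA: "finite A" and fB: "finite B" using assms finite_subset by blast+
  have "card (A - B) = card (B - A)"
    using assms(3) fA fB by (simp add: card_Diff_subset_Int Int_commute)
  then obtain h where h: "bij_betw h (A - B) (B - A)"
    using finite_same_card_bij fA fB by blast
  have "(\<Sum>i\<in>B - A. x!i) = (\<Sum>j\<in>A - B. x!(h j))"
    using sum.reindex_bij_betw[OF h, of "\<lambda>i. x!i"] by simp
  also have "\<dots> \<le> (\<Sum>j\<in>A - B. x!j)"
  proof (rule sum_mono)
    fix j assume j: "j \<in> A - B"
    then have "h j \<in> B" using h bij_betwE by fastforce
    moreover have "j \<in> {..<n} - B" using j assms(1) by auto
    ultimately show "x!(h j) \<le> x!j" using ord by blast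
  qed
  finally have le: "(\<Sum>i\<in>B - A. x!i) \<le> (\<Sum>j\<in>A - B. x!j)" .
  have "(\<Sum>i\<in>B. x!i) = (\<Sum>i\<in>A \<inter> B. x!i) + (\<Sum>i\<in>B - A. x!i)"
    using sum.Int_Diff[OF fB, of _ A] by (simp add: Int_commute)
  also have "\<dots> \<le> (\<Sum>i\<in>A \<inter> B. x!i) + (\<Sum>i\<in>A - B. x!i)"
    using le by (rule add_left_mono)
  also have "\<dots> = (\<Sum>i\<in>A. x!i)"
    using sum.Int_Diff[OF fA, of "\<lambda>i. x!i" B] by simp
  finally show ?thesis .
qed

lemma sorted_esym:
  fixes x :: "ereal list"
  assumes len: "length x = n" and pi: "\<pi> permutes {..<n}"
    and ord: "\<forall>a b. a \<le> b \<longrightarrow> b < n \<longrightarrow> x!(\<pi> a) \<le> x!(\<pi> b)" and mn: "m \<le> n"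
  shows "elem_sym Rmin n m x = (\<Sum>i\<in>\<pi> ` {..<m}. x!i)"
proof -
  let ?B = "\<pi> ` {..<m}"
  have Bs: "?B \<subseteq> {..<n}"
  proof
    fix i assume "i \<in> ?B"
    then obtain a where "a < m" "i = \<pi> a" by auto
    then show "i \<in> {..<n}" using mn permutes_in_image[OF pi, of a] by simp
  qed
  have "inj_on \<pi> {..<m}" by (rule inj_on_subset[OF permutes_inj[OF pi] subset_UNIV])
  then have cB: "card ?B = m" by (simp add: card_image)
  show ?thesis unfolding elem_Rmin
  proof (rule antisym)
    show "Inf ((\<lambda>A. \<Sum>i\<in>A. x!i) ` {A. A \<subseteq> {..<n} \<and> card A = m}) \<le> (\<Sum>i\<in>?B. x!i)"
      by (rule Inf_lower) (use Bs cB in blast)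
  next
    show "(\<Sum>i\<in>?B. x!i) \<le> Inf ((\<lambda>A. \<Sum>i\<in>A. x!i) ` {A. A \<subseteq> {..<n} \<and> card A = m})"
    proof (rule Inf_greatest)
      fix y assume "y \<in> (\<lambda>A. \<Sum>i\<in>A. x!i) ` {A. A \<subseteq> {..<n} \<and> card A = m}"
      then obtain A where A: "A \<subseteq> {..<n}" "card A = m" "y = (\<Sum>i\<in>A. x!i)" by auto
      have "\<forall>i\<in>?B. \<forall>j\<in>{..<n}-?B. x!i \<le> x!j"
      proof (intro ballI)
        fix i j assume i: "i \<in> ?B" and j: "j \<in> {..<n}-?B"
        obtain a where a: "a < m" "i = \<pi> a" using i by auto
        define b where "b = inv \<pi> j"
        have jb: "j = \<pi> b" using permutes_inverses(1)[OF pi, of j] b_def by simp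
        have "j < n" using j by simp
        then have bn: "b < n" using jb permutes_in_image[OF pi, of b] by simp
        have "\<not> b < m" using j jb by auto
        then have "a \<le> b" using a by simp
        then show "x!i \<le> x!j" using a(2) jb bn ord by blast
      qed
      then show "(\<Sum>i\<in>?B. x!i) \<le> y" using exch[OF A(1) Bs] A cB by simp
    qed
  qed
qed

lemma layer:
  fixes x :: "ereal list"
  assumes "length d = n" "length x = n" "\<forall>i<n. d!i \<le> D"
  shows "mono_eval Rmin d x = (\<Sum>t<D. \<Sum>i\<in>{i. i<n \<and> t < d!i}. x!i)"
proof -
  have "mono_eval Rmin d x = (\<Sum>i<n. \<Sum>t<d!i. x!i)"
    using assms by (simp add: mono_Rmin)
  also have "\<dots> = (\<Sum>i<n. \<Sum>t<D. if t < d!i then x!i else 0)"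
  proof (rule sum.cong[OF refl])
    fix i assume "i \<in> {..<n}"
    then have "{t \<in> {..<D}. t < d!i} = {..<d!i}" using assms(3) by auto
    then show "(\<Sum>t<d!i. x!i) = (\<Sum>t<D. if t < d!i then x!i else 0)"
      using sum.inter_filter[of "{..<D}" "\<lambda>t. x!i" "\<lambda>t. t < d!i"] by simp
  qed
  also have "\<dots> = (\<Sum>t<D. \<Sum>i<n. if t < d!i then x!i else 0)"
    by (rule sum.swap)
  also have "\<dots> = (\<Sum>t<D. \<Sum>i\<in>{i. i<n \<and> t < d!i}. x!i)"
  proof (rule sum.cong[OF refl])
    fix t
    have "{i \<in> {..<n}. t < d!i} = {i. i<n \<and> t < d!i}" by auto
    then show "(\<Sum>i<n. if t < d!i then x!i else 0) = (\<Sum>i\<in>{i. i<n \<and> t < d!i}. x!i)"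
      using sum.inter_filter[of "{..<n}" "\<lambda>i. x!i" "\<lambda>i. t < d!i"] by simp
  qed
  finally show ?thesis .
qed

definition mcount :: "nat \<Rightarrow> nat list \<Rightarrow> nat \<Rightarrow> nat" where
  "mcount n d t = card {i. i<n \<and> t < d!i}"

definition Lsum :: "nat \<Rightarrow> nat list \<Rightarrow> ereal list \<Rightarrow> ereal" where
  "Lsum n d x = (\<Sum>t<sum_list d. elem_sym Rmin n (mcount n d t) x)"

lemma mcount_le: "mcount n d t \<le> n"
proof -
  have "card {i. i<n \<and> t < d!i} \<le> card {..<n}" by (rule card_mono) auto
  then show ?thesis by (simp add: mcount_def)
qed

lemma term_lower:
  fixes x :: "ereal list"
  assumes "length d = n" "length x = n"
  shows "Lsum n d x \<le> mono_eval Rmin d x"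
proof -
  have "\<forall>i<n. d!i \<le> sum_list d" using assms(1) elem_le_sum_list by auto
  then have "mono_eval Rmin d x = (\<Sum>t<sum_list d. \<Sum>i\<in>{i. i<n \<and> t < d!i}. x!i)"
    using layer assms by blast
  moreover have "Lsum n d x \<le> (\<Sum>t<sum_list d. \<Sum>i\<in>{i. i<n \<and> t < d!i}. x!i)"
    unfolding Lsum_def
  proof (rule sum_mono)
    fix t
    show "elem_sym Rmin n (mcount n d t) x \<le> (\<Sum>i\<in>{i. i<n \<and> t < d!i}. x!i)"
      unfolding elem_Rmin mcount_def by (rule Inf_lower) auto
  qed
  ultimately show ?thesis by simp
qed

lemma down_closed:
  assumes "finite T" "\<forall>a b. b \<in> T \<longrightarrow> a \<le> b \<longrightarrow> a \<in> T"
  shows "T = {..<card (T::nat set)}"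
proof (cases "T = {}")
  case True then show ?thesis by simp
next
  case False
  have "T \<subseteq> {..Max T}" using assms Max_ge by auto
  moreover have "{..Max T} \<subseteq> T" using assms(2) Max_in[OF assms(1) False] by auto
  ultimately have "T = {..Max T}" by blast
  then show ?thesis by (metis card_atMost lessThan_Suc_atMost)
qed

lemma perm_exp_nth: "i < n \<Longrightarrow> perm_exp n \<sigma> d ! i = d ! \<sigma> i"
  by (simp add: perm_exp_def)

lemma term_attain:
  fixes x :: "ereal list"
  assumes ld: "length d = n" and lx: "length x = n"
  shows "\<exists>\<sigma>. \<sigma> permutes {..<n} \<and> mono_eval Rmin (perm_exp n \<sigma> d) x = Lsum n d x"
proof -
  obtain \<pi> where pi: "\<pi> permutes {..<length x}" "permute_list \<pi> x = sort x"
    using mset_eq_permutation[of "sort x" x] by auto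
  have pin: "\<pi> permutes {..<n}" using pi lx by simp
  have ordx: "\<forall>a b. a \<le> b \<longrightarrow> b < n \<longrightarrow> x!(\<pi> a) \<le> x!(\<pi> b)"
  proof (intro allI impI)
    fix a b :: nat assume ab: "a \<le> b" "b < n"
    have "x!(\<pi> a) = sort x ! a" using pi ab lx by (metis le_less_trans permute_list_nth)
    moreover have "x!(\<pi> b) = sort x ! b" using pi ab lx by (metis permute_list_nth)
    ultimately show "x!(\<pi> a) \<le> x!(\<pi> b)"
      using sorted_nth_mono[OF sorted_sort[of x] ab(1)] ab lx by simp
  qed
  obtain \<rho> where rho: "\<rho> permutes {..<length d}" "permute_list \<rho> d = rev (sort d)"
    using mset_eq_permutation[of "rev (sort d)" d] by auto
  have rhon: "\<rho> permutes {..<n}" using rho ld by simp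
  have ordd: "\<forall>a b. a \<le> b \<longrightarrow> b < n \<longrightarrow> d!(\<rho> b) \<le> d!(\<rho> a)"
  proof (intro allI impI)
    fix a b :: nat assume ab: "a \<le> b" "b < n"
    have "d!(\<rho> a) = rev (sort d) ! a" using rho ab ld by (metis le_less_trans permute_list_nth)
    also have "\<dots> = sort d ! (n - Suc a)" using ab ld by (simp add: rev_nth)
    finally have 1: "d!(\<rho> a) = sort d ! (n - Suc a)" .
    have "d!(\<rho> b) = rev (sort d) ! b" using rho ab ld by (metis permute_list_nth)
    also have "\<dots> = sort d ! (n - Suc b)" using ab ld by (simp add: rev_nth)
    finally have 2: "d!(\<rho> b) = sort d ! (n - Suc b)" .
    have "n - Suc b \<le> n - Suc a" "n - Suc a < length (sort d)" using ab ld by auto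
    then show "d!(\<rho> b) \<le> d!(\<rho> a)" unfolding 1 2 by (rule sorted_nth_mono[OF sorted_sort[of d]])
  qed
  define \<sigma> where "\<sigma> = \<rho> \<circ> inv \<pi>"
  have sig: "\<sigma> permutes {..<n}" unfolding \<sigma>_def
    by (rule permutes_compose[OF permutes_inv[OF pin] rhon])
  define d' where "d' = perm_exp n \<sigma> d"
  have ld': "length d' = n" by (simp add: d'_def perm_exp_def)
  have d'n: "\<And>i. i < n \<Longrightarrow> d'!i = d!(\<sigma> i)" by (simp add: d'_def perm_exp_nth)
  have bnd: "\<forall>i<n. d'!i \<le> sum_list d"
  proof (intro allI impI)
    fix i assume i: "i < n"
    then have "\<sigma> i < n" using permutes_in_image[OF sig] by simp
    then show "d'!i \<le> sum_list d" using d'n[OF i] elem_le_sum_list[of "\<sigma> i" d] ld by simp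
  qed
  have "mono_eval Rmin d' x = (\<Sum>t<sum_list d. \<Sum>i\<in>{i. i<n \<and> t < d'!i}. x!i)"
    using layer[OF ld' lx bnd] .
  also have "\<dots> = Lsum n d x" unfolding Lsum_def
  proof (rule sum.cong[OF refl])
    fix t
    define T where "T = {a. a < n \<and> t < d!(\<rho> a)}"
    have 1: "{i. i<n \<and> t < d'!i} = \<pi> ` T"
    proof (intro equalityI subsetI)
      fix i assume "i \<in> {i. i<n \<and> t < d'!i}"
      then have i: "i < n" "t < d!(\<sigma> i)" using d'n by auto
      have "inv \<pi> i < n" using i permutes_in_image[OF permutes_inv[OF pin]] by simp
      moreover have "\<sigma> i = \<rho> (inv \<pi> i)" by (simp add: \<sigma>_def)
      ultimately have "inv \<pi> i \<in> T" using i T_def by simp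
      then show "i \<in> \<pi> ` T" using permutes_inverses[OF pin] by (metis image_eqI)
    next
      fix i assume "i \<in> \<pi> ` T"
      then obtain a where a: "a < n" "t < d!(\<rho> a)" "i = \<pi> a" using T_def by auto
      have "i < n" using a permutes_in_image[OF pin] by simp
      moreover have "\<sigma> i = \<rho> a" using a permutes_inverses[OF pin] by (simp add: \<sigma>_def)
      ultimately show "i \<in> {i. i<n \<and> t < d'!i}" using a d'n by simp
    qed
    have fT: "finite T" by (simp add: T_def)
    have 2: "T = {..<card T}"
    proof (rule down_closed[OF fT], intro allI impI)
      fix a b assume "b \<in> T" "a \<le> b"
      then have "a < n" "t < d!(\<rho> b)" "b < n" using T_def by auto
      moreover have "d!(\<rho> b) \<le> d!(\<rho> a)" using ordd \<open>a \<le> b\<close> \<open>b < n\<close> by blast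
      ultimately show "a \<in> T" using T_def by simp
    qed
    have "\<rho> ` T = {i. i<n \<and> t < d!i}"
    proof (intro equalityI subsetI)
      fix i assume "i \<in> \<rho> ` T" then show "i \<in> {i. i<n \<and> t < d!i}"
        using T_def permutes_in_image[OF rhon] by auto
    next
      fix i assume i: "i \<in> {i. i<n \<and> t < d!i}"
      have "i = \<rho> (inv \<rho> i)" using permutes_inverses[OF rhon] by simp
      moreover have "inv \<rho> i < n" using i permutes_in_image[OF permutes_inv[OF rhon]] by simp
      ultimately show "i \<in> \<rho> ` T" using i T_def by (metis (mono_tags, lifting) image_eqI mem_Collect_eq)
    qed
    moreover have "inj_on \<rho> T" by (rule inj_on_subset[OF permutes_inj[OF rhon] subset_UNIV])
    ultimately have 3: "card T = mcount n d t"
      unfolding mcount_def by (metis card_image)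
    have "(\<Sum>i\<in>{i. i<n \<and> t < d'!i}. x!i) = (\<Sum>i\<in>\<pi> ` {..<mcount n d t}. x!i)"
      using 1 2 3 by simp
    also have "\<dots> = elem_sym Rmin n (mcount n d t) x"
      using sorted_esym[OF lx pin ordx mcount_le] by simp
    finally show "(\<Sum>i\<in>{i. i<n \<and> t < d'!i}. x!i) = elem_sym Rmin n (mcount n d t) x" .
  qed
  finally have "mono_eval Rmin (perm_exp n \<sigma> d) x = Lsum n d x" by (simp add: d'_def)
  then show ?thesis using sig by blast
qed

definition expo :: "nat \<Rightarrow> nat list \<Rightarrow> nat list" where
  "expo n d = map (\<lambda>j. card {t. t < sum_list d \<and> mcount n d t = Suc j}) [0..<n]"

lemma const_sum: "finite T \<Longrightarrow> (\<Sum>s<card T. c) = (\<Sum>t\<in>T. (c::ereal))"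
proof -
  assume "finite T"
  then obtain h where "bij_betw h {0..<card T} T" using ex_bij_betw_nat_finite by blast
  then show ?thesis using sum.reindex_bij_betw[of h "{0..<card T}" T "\<lambda>_. c"]
    by (simp add: lessThan_atLeast0)
qed

lemma mono_expo:
  fixes x :: "ereal list"
  assumes "length x = n"
  shows "mono_eval Rmin (expo n d) (map (\<lambda>j. elem_sym Rmin n (Suc j) x) [0..<n]) = Lsum n d x"
proof -
  let ?e = "\<lambda>k. elem_sym Rmin n k x"
  let ?T = "\<lambda>k. {t. t < sum_list d \<and> mcount n d t = k}"
  have "mono_eval Rmin (expo n d) (map (\<lambda>j. ?e (Suc j)) [0..<n]) =
        (\<Sum>j<n. \<Sum>s<card (?T (Suc j)). ?e (Suc j))"
    by (simp add: mono_Rmin expo_def)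
  also have "\<dots> = (\<Sum>j<n. \<Sum>t\<in>?T (Suc j). ?e (mcount n d t))"
    by (rule sum.cong[OF refl]) (simp add: const_sum)
  also have "\<dots> = (\<Sum>k<Suc n. \<Sum>t\<in>?T k. ?e (mcount n d t))"
    by (simp only: sum.lessThan_Suc_shift) (simp add: elem_Rmin_0)
  also have "\<dots> = (\<Sum>t<sum_list d. ?e (mcount n d t))"
  proof -
    have "mcount n d ` {..<sum_list d} \<subseteq> {..<Suc n}" using mcount_le by (auto simp: less_Suc_eq_le)
    from sum.group[OF finite_lessThan finite_lessThan this, of "\<lambda>t. ?e (mcount n d t)"]
    show ?thesis by simp
  qed
  finally show ?thesis by (simp add: Lsum_def)
qed

lemma FE_Rmin: "fully_elementary Rmin"
  unfolding fully_elementary_def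
proof (intro allI impI)
  fix n p assume sp: "sym_fpoly Rmin n p"
  then have fp: "is_fpoly Rmin n p" by (simp add: sym_fpoly_def)
  have sym: "\<And>\<sigma> c d. \<sigma> permutes {..<n} \<Longrightarrow> (c,d) \<in> set p \<Longrightarrow> (c, perm_exp n \<sigma> d) \<in> set p"
  proof -
    fix \<sigma> c d assume s: "\<sigma> permutes {..<n}" and cd: "(c,d) \<in> set p"
    have "mset (map (\<lambda>(c, d). (c, perm_exp n \<sigma> d)) p) = mset p" using sp s by (simp add: sym_fpoly_def)
    then have "set (map (\<lambda>(c, d). (c, perm_exp n \<sigma> d)) p) = set p" by (metis set_mset_mset)
    then show "(c, perm_exp n \<sigma> d) \<in> set p" using cd by force
  qed
  define r where "r = map (\<lambda>(c,d). (c, expo n d)) p"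
  have "is_fpoly Rmin n r" using fp by (auto simp: is_fpoly_def r_def expo_def)
  moreover have "\<forall>x. length x = n \<and> set x \<subseteq> car Rmin \<longrightarrow>
      poly_eval Rmin p x = poly_eval Rmin r (map (\<lambda>j. elem_sym Rmin n (Suc j) x) [0..<n])"
  proof (intro allI impI)
    fix x :: "ereal list" assume "length x = n \<and> set x \<subseteq> car Rmin"
    then have lx: "length x = n" by simp
    have ld: "\<And>c d. (c,d) \<in> set p \<Longrightarrow> length d = n" using fp by (auto simp: is_fpoly_def)
    have R: "poly_eval Rmin r (map (\<lambda>j. elem_sym Rmin n (Suc j) x) [0..<n]) =
          Inf ((\<lambda>(c,d). c + Lsum n d x) ` set p)"
      unfolding poly_Rmin r_def using mono_expo[OF lx]
      by (simp add: image_image case_prod_beta)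
    show "poly_eval Rmin p x = poly_eval Rmin r (map (\<lambda>j. elem_sym Rmin n (Suc j) x) [0..<n])"
      unfolding R poly_Rmin[of p x]
    proof (rule antisym)
      show "Inf ((\<lambda>(c,d). c + mono_eval Rmin d x) ` set p) \<le> Inf ((\<lambda>(c,d). c + Lsum n d x) ` set p)"
      proof (rule Inf_greatest)
        fix y assume "y \<in> (\<lambda>(c,d). c + Lsum n d x) ` set p"
        then obtain c d where cd: "(c,d) \<in> set p" "y = c + Lsum n d x" by auto
        obtain \<sigma> where s: "\<sigma> permutes {..<n}" "mono_eval Rmin (perm_exp n \<sigma> d) x = Lsum n d x"
          using term_attain[OF ld[OF cd(1)] lx] by blast
        have "(c, perm_exp n \<sigma> d) \<in> set p" using sym[OF s(1) cd(1)] .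
        then have "Inf ((\<lambda>(c,d). c + mono_eval Rmin d x) ` set p) \<le> c + mono_eval Rmin (perm_exp n \<sigma> d) x"
          by (intro Inf_lower rev_image_eqI) auto
        then show "Inf ((\<lambda>(c,d). c + mono_eval Rmin d x) ` set p) \<le> y" using s cd by simp
      qed
    next
      show "Inf ((\<lambda>(c,d). c + Lsum n d x) ` set p) \<le> Inf ((\<lambda>(c,d). c + mono_eval Rmin d x) ` set p)"
      proof (rule Inf_greatest)
        fix y assume "y \<in> (\<lambda>(c,d). c + mono_eval Rmin d x) ` set p"
        then obtain c d where cd: "(c,d) \<in> set p" "y = c + mono_eval Rmin d x" by auto
        have "Inf ((\<lambda>(c,d). c + Lsum n d x) ` set p) \<le> c + Lsum n d x"
          using cd(1) by (intro Inf_lower rev_image_eqI) auto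
        also have "\<dots> \<le> y" using cd term_lower[OF ld[OF cd(1)] lx] by (simp add: add_left_mono)
        finally show "Inf ((\<lambda>(c,d). c + Lsum n d x) ` set p) \<le> y" .
      qed
    qed
  qed
  ultimately show "\<exists>r. is_fpoly Rmin n r \<and> (\<forall>x. length x = n \<and> set x \<subseteq> car Rmin \<longrightarrow>
      poly_eval Rmin p x = poly_eval Rmin r (map (\<lambda>j. elem_sym Rmin n (Suc j) x) [0..<n]))" by blast
qed




definition closed_s :: "'a srng \<Rightarrow> bool" where
  "closed_s R \<longleftrightarrow> (\<forall>a\<in>car R. \<forall>b\<in>car R. sadd R a b \<in> car R \<and> smul R a b \<in> car R)
     \<and> szero R \<in> car R \<and> sone R \<in> car R"

definition hom_s :: "'a srng \<Rightarrow> 'b srng \<Rightarrow> ('a \<Rightarrow> 'b) \<Rightarrow> bool" where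
  "hom_s R R' h \<longleftrightarrow> (\<forall>a\<in>car R. \<forall>b\<in>car R. h (sadd R a b) = sadd R' (h a) (h b)
       \<and> h (smul R a b) = smul R' (h a) (h b)) \<and> h (szero R) = szero R' \<and> h (sone R) = sone R'"

context
  fixes R :: "'a srng" and R' :: "'b srng" and h
  assumes cl: "closed_s R" and hm: "hom_s R R' h"
begin

lemma spow_car: "a \<in> car R \<Longrightarrow> spow R a k \<in> car R"
  using cl by (induction k) (auto simp: spow_def closed_s_def)

lemma hom_spow: "a \<in> car R \<Longrightarrow> h (spow R a k) = spow R' (h a) k"
proof (induction k)
  case 0 then show ?case using hm by (simp add: spow_def hom_s_def)
next
  case (Suc k)
  have "spow R a k \<in> car R" using spow_car Suc by blast
  then show ?case using Suc hm by (simp add: spow_def hom_s_def)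
qed

lemma fold_mul_car: "set l \<subseteq> car R \<Longrightarrow> foldr (smul R) l (sone R) \<in> car R"
  using cl by (induction l) (auto simp: closed_s_def)

lemma hom_fold_mul: "set l \<subseteq> car R \<Longrightarrow> h (foldr (smul R) l (sone R)) = foldr (smul R') (map h l) (sone R')"
proof (induction l)
  case Nil then show ?case using hm by (simp add: hom_s_def)
next
  case (Cons a l)
  then have "foldr (smul R) l (sone R) \<in> car R" using fold_mul_car by auto
  then show ?case using Cons hm by (simp add: hom_s_def)
qed

lemma fold_add_car: "set l \<subseteq> car R \<Longrightarrow> foldr (sadd R) l (szero R) \<in> car R"
  using cl by (induction l) (auto simp: closed_s_def)

lemma hom_fold_add: "set l \<subseteq> car R \<Longrightarrow> h (foldr (sadd R) l (szero R)) = foldr (sadd R') (map h l) (szero R')"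
proof (induction l)
  case Nil then show ?case using hm by (simp add: hom_s_def)
next
  case (Cons a l)
  then have "foldr (sadd R) l (szero R) \<in> car R" using fold_add_car by auto
  then show ?case using Cons hm by (simp add: hom_s_def)
qed

lemma map2_spow_car: "set x \<subseteq> car R \<Longrightarrow> set (map2 (\<lambda>di xi. spow R xi di) d x) \<subseteq> car R"
  by (auto simp: set_zip intro!: spow_car)

lemma mono_car: "set x \<subseteq> car R \<Longrightarrow> mono_eval R d x \<in> car R"
  unfolding mono_eval_def by (rule fold_mul_car[OF map2_spow_car])

lemma hom_mono: "set x \<subseteq> car R \<Longrightarrow> h (mono_eval R d x) = mono_eval R' d (map h x)"
proof -
  assume x: "set x \<subseteq> car R"
  have "map h (map2 (\<lambda>di xi. spow R xi di) d x) = map2 (\<lambda>di xi. spow R' xi di) d (map h x)"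
    using x
  proof (induction d arbitrary: x)
    case Nil then show ?case by simp
  next
    case (Cons a d) then show ?case by (cases x) (auto simp: hom_spow)
  qed
  then show ?thesis unfolding mono_eval_def using hom_fold_mul[OF map2_spow_car[OF x]] by simp
qed

lemma poly_car: "set x \<subseteq> car R \<Longrightarrow> \<forall>(c,d)\<in>set p. c \<in> car R \<Longrightarrow> poly_eval R p x \<in> car R"
  unfolding poly_eval_def using cl
  by (intro fold_add_car) (auto simp: closed_s_def mono_car)

lemma hom_poly: "set x \<subseteq> car R \<Longrightarrow> \<forall>(c,d)\<in>set p. c \<in> car R \<Longrightarrow>
   h (poly_eval R p x) = poly_eval R' (map (\<lambda>(c,d). (h c, d)) p) (map h x)"
proof -
  assume x: "set x \<subseteq> car R" and p: "\<forall>(c,d)\<in>set p. c \<in> car R"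
  have s: "set (map (\<lambda>(c, d). smul R c (mono_eval R d x)) p) \<subseteq> car R"
    using p cl x by (auto simp: closed_s_def mono_car)
  have eq: "map h (map (\<lambda>(c, d). smul R c (mono_eval R d x)) p) =
        map (\<lambda>(c, d). smul R' c (mono_eval R' d (map h x))) (map (\<lambda>(c,d). (h c, d)) p)"
    using p x hm by (auto simp: hom_s_def hom_mono mono_car)
  have "h (poly_eval R p x) = foldr (sadd R') (map h (map (\<lambda>(c, d). smul R c (mono_eval R d x)) p)) (szero R')"
    unfolding poly_eval_def by (rule hom_fold_add[OF s])
  also have "\<dots> = poly_eval R' (map (\<lambda>(c,d). (h c, d)) p) (map h x)"
    by (simp only: eq poly_eval_def)
  finally show ?thesis .
qed

lemma elem_car: "length x = n \<Longrightarrow> set x \<subseteq> car R \<Longrightarrow> elem_sym R n j x \<in> car R"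
proof -
  assume l: "length x = n" and x: "set x \<subseteq> car R"
  have sub: "\<And>l. l \<in> set (subseqs [0..<n]) \<Longrightarrow> set l \<subseteq> {..<n}"
  proof -
    fix l assume "l \<in> set (subseqs [0..<n])"
    then have "set l \<in> set ` set (subseqs [0..<n])" by blast
    then show "set l \<subseteq> {..<n}" by (auto simp: subseqs_powset)
  qed
  have s1: "\<And>l. l \<in> set (subseqs [0..<n]) \<Longrightarrow> set (map (\<lambda>i. x!i) l) \<subseteq> car R"
  proof -
    fix l assume "l \<in> set (subseqs [0..<n])"
    then have "set l \<subseteq> {..<n}" using sub by blast
    then show "set (map (\<lambda>i. x!i) l) \<subseteq> car R" using l x nth_mem by fastforce
  qed
  let ?L = "map (\<lambda>l. foldr (smul R) (map (\<lambda>i. x ! i) l) (sone R))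
          (filter (\<lambda>l. length l = j) (subseqs [0..<n]))"
  have s2: "set ?L \<subseteq> car R"
  proof
    fix y assume "y \<in> set ?L"
    then obtain l where "l \<in> set (subseqs [0..<n])" "y = foldr (smul R) (map (\<lambda>i. x ! i) l) (sone R)"
      by auto
    then show "y \<in> car R" using fold_mul_car[OF s1] by simp
  qed
  show ?thesis unfolding elem_sym_def by (rule fold_add_car[OF s2])
qed

lemma hom_elem: "length x = n \<Longrightarrow> set x \<subseteq> car R \<Longrightarrow>
   h (elem_sym R n j x) = elem_sym R' n j (map h x)"
proof -
  assume l: "length x = n" and x: "set x \<subseteq> car R"
  have sub: "\<And>l. l \<in> set (subseqs [0..<n]) \<Longrightarrow> set l \<subseteq> {..<n}"
  proof -
    fix l assume "l \<in> set (subseqs [0..<n])"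
    then have "set l \<in> set ` set (subseqs [0..<n])" by blast
    then show "set l \<subseteq> {..<n}" by (auto simp: subseqs_powset)
  qed
  have s1: "\<And>l. l \<in> set (subseqs [0..<n]) \<Longrightarrow> set (map (\<lambda>i. x!i) l) \<subseteq> car R"
  proof -
    fix l assume "l \<in> set (subseqs [0..<n])"
    then have "set l \<subseteq> {..<n}" using sub by blast
    then show "set (map (\<lambda>i. x!i) l) \<subseteq> car R" using l x nth_mem by fastforce
  qed
  let ?L = "map (\<lambda>l. foldr (smul R) (map (\<lambda>i. x ! i) l) (sone R))
          (filter (\<lambda>l. length l = j) (subseqs [0..<n]))"
  have s2: "set ?L \<subseteq> car R"
  proof
    fix y assume "y \<in> set ?L"
    then obtain l where "l \<in> set (subseqs [0..<n])" "y = foldr (smul R) (map (\<lambda>i. x ! i) l) (sone R)"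
      by auto
    then show "y \<in> car R" using fold_mul_car[OF s1] by simp
  qed
  have "\<forall>l\<in>set (filter (\<lambda>l. length l = j) (subseqs [0..<n])).
     h (foldr (smul R) (map (\<lambda>i. x ! i) l) (sone R)) = foldr (smul R') (map (\<lambda>i. map h x ! i) l) (sone R')"
  proof
    fix l assume "l \<in> set (filter (\<lambda>l. length l = j) (subseqs [0..<n]))"
    then have ls: "l \<in> set (subseqs [0..<n])" by simp
    have e: "map h (map (\<lambda>i. x ! i) l) = map (\<lambda>i. map h x ! i) l" using sub[OF ls] l by auto
    show "h (foldr (smul R) (map (\<lambda>i. x ! i) l) (sone R)) =
               foldr (smul R') (map (\<lambda>i. map h x ! i) l) (sone R')"
      using hom_fold_mul[OF s1[OF ls]] unfolding e .
  qed
  then have "map h ?L = map (\<lambda>l. foldr (smul R') (map (\<lambda>i. map h x ! i) l) (sone R'))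
          (filter (\<lambda>l. length l = j) (subseqs [0..<n]))"
    by (simp add: map_eq_conv)
  then show ?thesis unfolding elem_sym_def using hom_fold_add[OF s2] by metis
qed

end

lemma FE_transfer:
  assumes cl: "closed_s R" and hm: "hom_s R R' h"
    and hc: "\<forall>a\<in>car R. h a \<in> car R'" and gc: "\<forall>y\<in>car R'. g y \<in> car R"
    and hg: "\<forall>y\<in>car R'. h (g y) = y"
    and fe: "fully_elementary R"
  shows "fully_elementary R'"
  unfolding fully_elementary_def
proof (intro allI impI)
  fix n p' assume sp: "sym_fpoly R' n p'"
  define p where "p = map (\<lambda>(c,d). (g c, d)) p'"
  have fp': "is_fpoly R' n p'" using sp by (simp add: sym_fpoly_def)
  have "sym_fpoly R n p"
    unfolding sym_fpoly_def
  proof (intro conjI allI impI)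
    show "is_fpoly R n p" using fp' gc by (auto simp: is_fpoly_def p_def)
  next
    fix \<sigma> :: "nat \<Rightarrow> nat" assume s: "\<sigma> permutes {..<n}"
    have m: "mset (map (\<lambda>(c, d). (c, perm_exp n \<sigma> d)) p') = mset p'" using sp s by (simp add: sym_fpoly_def)
    have "map (\<lambda>(c, d). (c, perm_exp n \<sigma> d)) p =
          map (\<lambda>(c,d). (g c, d)) (map (\<lambda>(c, d). (c, perm_exp n \<sigma> d)) p')"
      by (simp add: p_def case_prod_beta)
    then have "mset (map (\<lambda>(c, d). (c, perm_exp n \<sigma> d)) p) =
        image_mset (\<lambda>(c,d). (g c, d)) (mset (map (\<lambda>(c, d). (c, perm_exp n \<sigma> d)) p'))"
      by (simp only: mset_map)
    also have "\<dots> = image_mset (\<lambda>(c,d). (g c, d)) (mset p')" by (simp only: m)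
    also have "\<dots> = mset p" by (simp add: p_def)
    finally show "mset (map (\<lambda>(c, d). (c, perm_exp n \<sigma> d)) p) = mset p" .
  qed
  then obtain r where r: "is_fpoly R n r" and req: "\<forall>x. length x = n \<and> set x \<subseteq> car R \<longrightarrow>
       poly_eval R p x = poly_eval R r (map (\<lambda>j. elem_sym R n (Suc j) x) [0..<n])"
    using fe unfolding fully_elementary_def by blast
  define r' where "r' = map (\<lambda>(c,d). (h c, d)) r"
  have "is_fpoly R' n r'" using r hc by (auto simp: is_fpoly_def r'_def)
  moreover have "\<forall>x'. length x' = n \<and> set x' \<subseteq> car R' \<longrightarrow>
       poly_eval R' p' x' = poly_eval R' r' (map (\<lambda>j. elem_sym R' n (Suc j) x') [0..<n])"
  proof (intro allI impI)
    fix x' assume x': "length x' = n \<and> set x' \<subseteq> car R'"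
    define x where "x = map g x'"
    have lx: "length x = n" and sx: "set x \<subseteq> car R" using x' gc by (auto simp: x_def)
    have hx: "map h x = x'" unfolding x_def map_map by (rule map_idI) (use x' hg in auto)
    have pc: "\<forall>(c,d)\<in>set p. c \<in> car R" using fp' gc by (auto simp: is_fpoly_def p_def)
    have rc: "\<forall>(c,d)\<in>set r. c \<in> car R" using r by (auto simp: is_fpoly_def)
    have pp: "map (\<lambda>(c,d). (h c, d)) p = p'"
      using fp' hg by (auto simp: is_fpoly_def p_def intro!: map_idI)
    let ?E = "map (\<lambda>j. elem_sym R n (Suc j) x) [0..<n]"
    have sE: "set ?E \<subseteq> car R" using elem_car[OF cl hm lx sx] by auto
    have hE: "map h ?E = map (\<lambda>j. elem_sym R' n (Suc j) x') [0..<n]"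
      using hom_elem[OF cl hm lx sx] hx by simp
    have "poly_eval R' p' x' = h (poly_eval R p x)"
      using hom_poly[OF cl hm sx pc] pp hx by simp
    also have "\<dots> = h (poly_eval R r ?E)" using req lx sx by simp
    also have "\<dots> = poly_eval R' r' (map h ?E)"
      unfolding r'_def by (rule hom_poly[OF cl hm sE rc])
    also have "\<dots> = poly_eval R' r' (map (\<lambda>j. elem_sym R' n (Suc j) x') [0..<n])"
      by (simp only: hE)
    finally show "poly_eval R' p' x' = poly_eval R' r' (map (\<lambda>j. elem_sym R' n (Suc j) x') [0..<n])" .
  qed
  ultimately show "\<exists>r. is_fpoly R' n r \<and> (\<forall>x. length x = n \<and> set x \<subseteq> car R' \<longrightarrow>
       poly_eval R' p' x = poly_eval R' r (map (\<lambda>j. elem_sym R' n (Suc j) x) [0..<n]))" by blast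
qed




lemma Rmax_simps[simp]: "sadd Rmax = max" "smul Rmax = (+)" "szero Rmax = -\<infinity>" "sone Rmax = 0"
   "car Rmax = {x. x \<noteq> \<infinity>}"
  by (simp_all add: Rmax_def)

lemma closed_Rmin: "closed_s Rmin"
  unfolding closed_s_def by (auto simp: min_def)

lemma neg_min: "- min a b = max (- a) (- (b::ereal))"
  by (auto simp: min_def max_def)

lemma neg_max: "- max a b = min (- a) (- (b::ereal))"
  by (auto simp: min_def max_def)

lemma neg_add: "a \<noteq> -\<infinity> \<Longrightarrow> b \<noteq> -\<infinity> \<Longrightarrow> - (a + b) = - a + - (b::ereal)"
  by (cases a; cases b) auto

lemma neg_add': "a \<noteq> \<infinity> \<Longrightarrow> b \<noteq> \<infinity> \<Longrightarrow> - (a + b) = - a + - (b::ereal)"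
  by (cases a; cases b) auto

lemma hom_neg: "hom_s Rmin Rmax uminus"
  unfolding hom_s_def by (auto simp: neg_min neg_add)

lemma FE_Rmax: "fully_elementary Rmax"
  by (rule FE_transfer[OF closed_Rmin hom_neg _ _ _ FE_Rmin, where g = uminus]) (auto simp: ereal_uminus_eq_reorder)

lemma Ssym_add: "sadd (Ssym X) a b = (sadd X (fst a) (fst b), sadd X (snd a) (snd b))"
  by (cases a; cases b) (simp add: Ssym_def)

lemma Ssym_mul: "smul (Ssym X) a b = (sadd X (smul X (fst a) (fst b)) (smul X (snd a) (snd b)),
      sadd X (smul X (fst a) (snd b)) (smul X (snd a) (fst b)))"
  by (cases a; cases b) (simp add: Ssym_def)

lemma Ssym_simps[simp]: "szero (Ssym X) = (szero X, szero X)" "sone (Ssym X) = (sone X, szero X)"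
  "car (Ssym X) = car X \<times> car X"
  by (simp_all add: Ssym_def)

definition sv :: "ereal \<times> ereal \<Rightarrow> ereal \<times> int" where
  "sv a = (min (fst a) (snd a), if fst a < snd a then 1 else if snd a < fst a then -1 else 0)"

lemma sim_min_iff: "(a, b) \<in> sim_rel Rmin \<longleftrightarrow> a \<in> car (Ssym Rmin) \<and> b \<in> car (Ssym Rmin) \<and> sv a = sv b"
proof -
  obtain a1 a2 b1 b2 where ab: "a = (a1,a2)" "b = (b1,b2)" by (cases a, cases b)
  show ?thesis unfolding ab sim_rel_def sv_def
    by (cases a1; cases a2; cases b1; cases b2) (auto simp: min_def)
qed

definition addsv :: "ereal \<times> int \<Rightarrow> ereal \<times> int \<Rightarrow> ereal \<times> int" where
  "addsv p q = (if fst p < fst q then p else if fst q < fst p then q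
      else (fst p, if snd p = snd q then snd p else 0))"

definition mulsv :: "ereal \<times> int \<Rightarrow> ereal \<times> int \<Rightarrow> ereal \<times> int" where
  "mulsv p q = (fst p + fst q, snd p * snd q)"

lemma sv_add: "a \<in> car (Ssym Rmin) \<Longrightarrow> b \<in> car (Ssym Rmin) \<Longrightarrow>
   sv (sadd (Ssym Rmin) a b) = addsv (sv a) (sv b)"
proof -
  assume "a \<in> car (Ssym Rmin)" "b \<in> car (Ssym Rmin)"
  moreover obtain a1 a2 b1 b2 where ab: "a = (a1,a2)" "b = (b1,b2)" by (cases a, cases b)
  ultimately show ?thesis unfolding ab sv_def addsv_def Ssym_add
    by (cases a1; cases a2; cases b1; cases b2) (auto simp: min_def)
qed

lemma sv_mul: "a \<in> car (Ssym Rmin) \<Longrightarrow> b \<in> car (Ssym Rmin) \<Longrightarrow>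
   sv (smul (Ssym Rmin) a b) = mulsv (sv a) (sv b)"
proof -
  assume "a \<in> car (Ssym Rmin)" "b \<in> car (Ssym Rmin)"
  moreover obtain a1 a2 b1 b2 where ab: "a = (a1,a2)" "b = (b1,b2)" by (cases a, cases b)
  ultimately show ?thesis unfolding ab sv_def mulsv_def Ssym_mul
    by (cases a1; cases a2; cases b1; cases b2) (auto simp: min_def)
qed




lemma closed_Smin: "closed_s (Ssym Rmin)"
  unfolding closed_s_def Ssym_add Ssym_mul by (auto simp: min_def)

lemma equiv_kernel: "E = {(a,b). a \<in> C \<and> b \<in> C \<and> f a = f b} \<Longrightarrow> equiv C E"
  unfolding equiv_def refl_on_def sym_def trans_def by auto

lemma equiv_min: "equiv (car (Ssym Rmin)) (sim_rel Rmin)"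
  by (rule equiv_kernel[where f = sv]) (auto simp: sim_min_iff simp del: Ssym_simps)

lemma cong_min: "(a,a') \<in> sim_rel Rmin \<Longrightarrow> (b,b') \<in> sim_rel Rmin \<Longrightarrow>
   (sadd (Ssym Rmin) a b, sadd (Ssym Rmin) a' b') \<in> sim_rel Rmin \<and>
   (smul (Ssym Rmin) a b, smul (Ssym Rmin) a' b') \<in> sim_rel Rmin"
proof -
  assume 1: "(a,a') \<in> sim_rel Rmin" and 2: "(b,b') \<in> sim_rel Rmin"
  then have c: "a \<in> car (Ssym Rmin)" "a' \<in> car (Ssym Rmin)" "b \<in> car (Ssym Rmin)" "b' \<in> car (Ssym Rmin)"
    and e: "sv a = sv a'" "sv b = sv b'" unfolding sim_min_iff by blast+
  have cl: "\<And>x y. x \<in> car (Ssym Rmin) \<Longrightarrow> y \<in> car (Ssym Rmin) \<Longrightarrow>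
     sadd (Ssym Rmin) x y \<in> car (Ssym Rmin) \<and> smul (Ssym Rmin) x y \<in> car (Ssym Rmin)"
    using closed_Smin unfolding closed_s_def by blast
  show ?thesis unfolding sim_min_iff using c e cl sv_add sv_mul by metis
qed

lemma Symz_hom:
  assumes eq: "equiv (car (Ssym X)) (sim_rel X)"
    and cong: "\<And>a a' b b'. (a,a') \<in> sim_rel X \<Longrightarrow> (b,b') \<in> sim_rel X \<Longrightarrow>
       (sadd (Ssym X) a b, sadd (Ssym X) a' b') \<in> sim_rel X \<and>
       (smul (Ssym X) a b, smul (Ssym X) a' b') \<in> sim_rel X"
    and cl: "closed_s (Ssym X)"
  shows "hom_s (Ssym X) (Symz X) (\<lambda>a. sim_rel X `` {a})" and "closed_s (Symz X)"
proof -
  let ?E = "sim_rel X" and ?S = "Ssym X"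
  have some: "\<And>a. a \<in> car ?S \<Longrightarrow> (a, SOME a'. a' \<in> ?E `` {a}) \<in> ?E"
  proof -
    fix a assume "a \<in> car ?S"
    then have "a \<in> ?E `` {a}" by (rule equiv_class_self[OF eq])
    then have "(SOME a'. a' \<in> ?E `` {a}) \<in> ?E `` {a}" by (rule someI)
    then show "(a, SOME a'. a' \<in> ?E `` {a}) \<in> ?E" by simp
  qed
  have H: "\<And>a b. a \<in> car ?S \<Longrightarrow> b \<in> car ?S \<Longrightarrow>
      sadd (Symz X) (?E `` {a}) (?E `` {b}) = ?E `` {sadd ?S a b} \<and>
      smul (Symz X) (?E `` {a}) (?E `` {b}) = ?E `` {smul ?S a b}"
  proof -
    fix a b assume a: "a \<in> car ?S" and b: "b \<in> car ?S"
    define a' where "a' = (SOME a'. a' \<in> ?E `` {a})"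
    define b' where "b' = (SOME b'. b' \<in> ?E `` {b})"
    have c: "(sadd ?S a b, sadd ?S a' b') \<in> ?E \<and> (smul ?S a b, smul ?S a' b') \<in> ?E"
      unfolding a'_def b'_def by (rule cong[OF some[OF a] some[OF b]])
    have "sadd (Symz X) (?E `` {a}) (?E `` {b}) = ?E `` {sadd ?S a' b'}"
      "smul (Symz X) (?E `` {a}) (?E `` {b}) = ?E `` {smul ?S a' b'}"
      unfolding a'_def b'_def by (simp_all add: Symz_def)
    moreover have "?E `` {sadd ?S a b} = ?E `` {sadd ?S a' b'}" "?E `` {smul ?S a b} = ?E `` {smul ?S a' b'}"
      using equiv_class_eq[OF eq] c by blast+
    ultimately show "sadd (Symz X) (?E `` {a}) (?E `` {b}) = ?E `` {sadd ?S a b} \<and>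
      smul (Symz X) (?E `` {a}) (?E `` {b}) = ?E `` {smul ?S a b}" by simp
  qed
  show "hom_s ?S (Symz X) (\<lambda>a. ?E `` {a})"
    unfolding hom_s_def using H by (simp add: Symz_def del: Ssym_simps)
  show "closed_s (Symz X)"
    unfolding closed_s_def
  proof (intro conjI ballI)
    fix A B assume A: "A \<in> car (Symz X)" and B: "B \<in> car (Symz X)"
    obtain a where a: "a \<in> car ?S" "A = ?E `` {a}" using A by (auto simp: Symz_def elim!: quotientE simp del: Ssym_simps)
    obtain b where b: "b \<in> car ?S" "B = ?E `` {b}" using B by (auto simp: Symz_def elim!: quotientE simp del: Ssym_simps)
    have "sadd ?S a b \<in> car ?S" "smul ?S a b \<in> car ?S" using cl a b unfolding closed_s_def by blast+
    then show "sadd (Symz X) A B \<in> car (Symz X)" "smul (Symz X) A B \<in> car (Symz X)"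
      using H[OF a(1) b(1)] a b by (simp_all add: Symz_def quotientI del: Ssym_simps)
  next
    show "szero (Symz X) \<in> car (Symz X)" "sone (Symz X) \<in> car (Symz X)"
      using cl by (simp_all add: Symz_def quotientI closed_s_def del: Ssym_simps)
  qed
qed




definition neg2 :: "ereal \<times> ereal \<Rightarrow> ereal \<times> ereal" where
  "neg2 a = (- fst a, - snd a)"

lemma neg2_neg2[simp]: "neg2 (neg2 a) = a"
  by (simp add: neg2_def)

lemma car_neg2: "neg2 a \<in> car (Ssym Rmin) \<longleftrightarrow> a \<in> car (Ssym Rmax)"
  by (cases a) (simp add: neg2_def ereal_uminus_eq_reorder)

lemma car_neg2': "neg2 a \<in> car (Ssym Rmax) \<longleftrightarrow> a \<in> car (Ssym Rmin)"
  by (cases a) (simp add: neg2_def ereal_uminus_eq_reorder)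

lemma sim_max_iff: "(a,b) \<in> sim_rel Rmax \<longleftrightarrow> (neg2 a, neg2 b) \<in> sim_rel Rmin"
proof -
  obtain a1 a2 b1 b2 where ab: "a = (a1,a2)" "b = (b1,b2)" by (cases a, cases b)
  have "max a1 b2 = max a2 b1 \<longleftrightarrow> min (-a1) (-b2) = min (-a2) (-b1)"
    by (simp add: neg_max[symmetric])
  then show ?thesis unfolding ab sim_rel_def neg2_def
    by (auto simp: ereal_uminus_eq_reorder)
qed

lemma neg2_add: "neg2 (sadd (Ssym Rmax) a b) = sadd (Ssym Rmin) (neg2 a) (neg2 b)"
  by (simp add: neg2_def Ssym_add neg_max)

lemma neg2_mul: "a \<in> car (Ssym Rmax) \<Longrightarrow> b \<in> car (Ssym Rmax) \<Longrightarrow>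
   neg2 (smul (Ssym Rmax) a b) = smul (Ssym Rmin) (neg2 a) (neg2 b)"
  by (cases a; cases b) (auto simp add: neg2_def Ssym_mul neg_max neg_add')

lemma equiv_max: "equiv (car (Ssym Rmax)) (sim_rel Rmax)"
  by (rule equiv_kernel[where f = "\<lambda>a. sv (neg2 a)"])
     (auto simp: sim_max_iff sim_min_iff car_neg2 simp del: Ssym_simps)

lemma closed_Smax: "closed_s (Ssym Rmax)"
  unfolding closed_s_def Ssym_add Ssym_mul by (auto simp: max_def)

lemma cong_max: "(a,a') \<in> sim_rel Rmax \<Longrightarrow> (b,b') \<in> sim_rel Rmax \<Longrightarrow>
   (sadd (Ssym Rmax) a b, sadd (Ssym Rmax) a' b') \<in> sim_rel Rmax \<and>
   (smul (Ssym Rmax) a b, smul (Ssym Rmax) a' b') \<in> sim_rel Rmax"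
proof -
  assume 1: "(a,a') \<in> sim_rel Rmax" and 2: "(b,b') \<in> sim_rel Rmax"
  have c: "a \<in> car (Ssym Rmax)" "a' \<in> car (Ssym Rmax)" "b \<in> car (Ssym Rmax)" "b' \<in> car (Ssym Rmax)"
    using 1 2 unfolding sim_rel_def by auto
  have "(neg2 a, neg2 a') \<in> sim_rel Rmin" "(neg2 b, neg2 b') \<in> sim_rel Rmin"
    using 1 2 sim_max_iff by blast+
  from cong_min[OF this] show ?thesis
    unfolding sim_max_iff neg2_add neg2_mul[OF c(1,3)] neg2_mul[OF c(2,4)] .
qed

lemma img_max: "a \<in> car (Ssym Rmax) \<Longrightarrow> neg2 ` (sim_rel Rmax `` {a}) = sim_rel Rmin `` {neg2 a}"
proof (intro equalityI subsetI)
  fix c assume "c \<in> neg2 ` (sim_rel Rmax `` {a})"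
  then show "c \<in> sim_rel Rmin `` {neg2 a}" using sim_max_iff by auto
next
  fix c assume "c \<in> sim_rel Rmin `` {neg2 a}"
  then have "(a, neg2 c) \<in> sim_rel Rmax" using sim_max_iff by simp
  then show "c \<in> neg2 ` (sim_rel Rmax `` {a})" by (metis Image_singleton_iff image_eqI neg2_neg2)
qed

lemma img_min: "b \<in> car (Ssym Rmin) \<Longrightarrow> neg2 ` (sim_rel Rmin `` {b}) = sim_rel Rmax `` {neg2 b}"
proof -
  assume b: "b \<in> car (Ssym Rmin)"
  have "neg2 ` (sim_rel Rmax `` {neg2 b}) = sim_rel Rmin `` {b}"
    using img_max[of "neg2 b"] b car_neg2' by simp
  then have "neg2 ` neg2 ` (sim_rel Rmax `` {neg2 b}) = neg2 ` (sim_rel Rmin `` {b})" by simp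
  then show ?thesis by (simp add: image_image)
qed

lemmas homQmax = Symz_hom[OF equiv_max cong_max closed_Smax]
lemmas homQmin = Symz_hom[OF equiv_min cong_min closed_Smin]

lemma carQ: "A \<in> car (Symz X) \<Longrightarrow> \<exists>a\<in>car (Ssym X). A = sim_rel X `` {a}"
  by (auto simp: Symz_def elim!: quotientE simp del: Ssym_simps)

lemma FE_Symz_max_min: "fully_elementary (Symz Rmax) \<Longrightarrow> fully_elementary (Symz Rmin)"
proof (rule FE_transfer[OF homQmax(2), where h = "\<lambda>A. neg2 ` A" and g = "\<lambda>A. neg2 ` A"])
  have hm: "\<And>a b. a \<in> car (Ssym Rmax) \<Longrightarrow> b \<in> car (Ssym Rmax) \<Longrightarrow>
      sadd (Symz Rmax) (sim_rel Rmax `` {a}) (sim_rel Rmax `` {b}) = sim_rel Rmax `` {sadd (Ssym Rmax) a b} \<and>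
      smul (Symz Rmax) (sim_rel Rmax `` {a}) (sim_rel Rmax `` {b}) = sim_rel Rmax `` {smul (Ssym Rmax) a b}"
    using homQmax(1) unfolding hom_s_def by blast
  have hn: "\<And>a b. a \<in> car (Ssym Rmin) \<Longrightarrow> b \<in> car (Ssym Rmin) \<Longrightarrow>
      sadd (Symz Rmin) (sim_rel Rmin `` {a}) (sim_rel Rmin `` {b}) = sim_rel Rmin `` {sadd (Ssym Rmin) a b} \<and>
      smul (Symz Rmin) (sim_rel Rmin `` {a}) (sim_rel Rmin `` {b}) = sim_rel Rmin `` {smul (Ssym Rmin) a b}"
    using homQmin(1) unfolding hom_s_def by blast
  have cS: "\<And>a b. a \<in> car (Ssym Rmax) \<Longrightarrow> b \<in> car (Ssym Rmax) \<Longrightarrow>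
      sadd (Ssym Rmax) a b \<in> car (Ssym Rmax) \<and> smul (Ssym Rmax) a b \<in> car (Ssym Rmax)"
    using closed_Smax unfolding closed_s_def by blast
  show "hom_s (Symz Rmax) (Symz Rmin) (\<lambda>A. neg2 ` A)"
    unfolding hom_s_def
  proof (intro conjI ballI)
    fix A B assume A: "A \<in> car (Symz Rmax)" and B: "B \<in> car (Symz Rmax)"
    obtain a where a: "a \<in> car (Ssym Rmax)" "A = sim_rel Rmax `` {a}" using carQ[OF A] by blast
    obtain b where b: "b \<in> car (Ssym Rmax)" "B = sim_rel Rmax `` {b}" using carQ[OF B] by blast
    have na: "neg2 a \<in> car (Ssym Rmin)" "neg2 b \<in> car (Ssym Rmin)" using a b car_neg2 by blast+
    show "neg2 ` sadd (Symz Rmax) A B = sadd (Symz Rmin) (neg2 ` A) (neg2 ` B)"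
      using hm[OF a(1) b(1)] hn[OF na] img_max[OF a(1)] img_max[OF b(1)] img_max cS[OF a(1) b(1)]
      by (simp add: a(2) b(2) neg2_add)
    show "neg2 ` smul (Symz Rmax) A B = smul (Symz Rmin) (neg2 ` A) (neg2 ` B)"
      using hm[OF a(1) b(1)] hn[OF na] img_max[OF a(1)] img_max[OF b(1)] img_max cS[OF a(1) b(1)]
      by (simp add: a(2) b(2) neg2_mul[OF a(1) b(1)])
  next
    have "(-\<infinity>, -\<infinity>) \<in> car (Ssym Rmax)" "(0, -\<infinity>) \<in> car (Ssym Rmax)" by auto
    from img_max[OF this(1)] img_max[OF this(2)]
    show "neg2 ` szero (Symz Rmax) = szero (Symz Rmin)" "neg2 ` sone (Symz Rmax) = sone (Symz Rmin)"
      by (simp_all add: Symz_def neg2_def)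
  qed
  show "\<forall>A\<in>car (Symz Rmax). neg2 ` A \<in> car (Symz Rmin)"
  proof
    fix A assume "A \<in> car (Symz Rmax)"
    then obtain a where a: "a \<in> car (Ssym Rmax)" "A = sim_rel Rmax `` {a}" using carQ by blast
    then have "neg2 a \<in> car (Ssym Rmin)" using car_neg2 by blast
    then show "neg2 ` A \<in> car (Symz Rmin)" using img_max[OF a(1)] a(2)
      by (simp add: Symz_def quotientI del: Ssym_simps)
  qed
  show "\<forall>A\<in>car (Symz Rmin). neg2 ` A \<in> car (Symz Rmax)"
  proof
    fix A assume "A \<in> car (Symz Rmin)"
    then obtain a where a: "a \<in> car (Ssym Rmin)" "A = sim_rel Rmin `` {a}" using carQ by blast
    then have "neg2 a \<in> car (Ssym Rmax)" using car_neg2' by blast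
    then show "neg2 ` A \<in> car (Symz Rmax)" using img_min[OF a(1)] a(2)
      by (simp add: Symz_def quotientI del: Ssym_simps)
  qed
  show "\<forall>A\<in>car (Symz Rmin). neg2 ` neg2 ` A = A"
    by (simp add: image_image)
qed




abbreviation "SM \<equiv> Ssym Rmin"

definition pv :: "ereal \<times> ereal \<Rightarrow> ereal" where "pv a = min (fst a) (snd a)"

lemma hom_pv: "hom_s SM Rmin pv"
  unfolding hom_s_def
proof (intro conjI ballI)
  fix a b assume a: "a \<in> car SM" and b: "b \<in> car SM"
  obtain a1 a2 b1 b2 where ab: "a = (a1,a2)" "b = (b1,b2)" by (cases a, cases b)
  show "pv (sadd SM a b) = sadd Rmin (pv a) (pv b)"
    by (simp add: pv_def Ssym_add ab min.assoc min.left_commute)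
  show "pv (smul SM a b) = smul Rmin (pv a) (pv b)"
    using a b unfolding pv_def Ssym_mul ab
    by (cases a1; cases a2; cases b1; cases b2) (auto simp: min_def)
qed (simp_all add: pv_def)

lemma fold_pair: "foldr (sadd SM) l (szero SM) =
   (foldr min (map fst l) \<infinity>, foldr min (map snd l) \<infinity>)"
  by (induction l) (simp_all add: Ssym_add)

lemma foldr_min_mem: "foldr min l (\<infinity>::ereal) \<in> insert \<infinity> (set l)"
  by (induction l) (auto simp: min_def)

lemma foldr_min_le: "y \<in> set l \<Longrightarrow> foldr min l (\<infinity>::ereal) \<le> y"
  by (simp add: foldr_min_Inf Inf_lower)

lemma cls_pos: "u \<in> car SM \<Longrightarrow> sim_rel Rmin `` {u} = sim_rel Rmin `` {(ereal z, \<infinity>)} \<Longrightarrow>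
   fst u = ereal z \<and> ereal z < snd u"
proof -
  assume u: "u \<in> car SM" and e: "sim_rel Rmin `` {u} = sim_rel Rmin `` {(ereal z, \<infinity>)}"
  have "u \<in> sim_rel Rmin `` {u}" by (rule equiv_class_self[OF equiv_min u])
  then have "((ereal z, \<infinity>), u) \<in> sim_rel Rmin" using e by simp
  then have "sv (ereal z, \<infinity>) = sv u" by (simp only: sim_min_iff)
  then have "min (fst u) (snd u) = ereal z" "fst u < snd u"
    by (auto simp: sv_def split: if_splits)
  then show ?thesis by (auto simp: min_def split: if_splits)
qed

lemma mono_Rmin2: "mono_eval Rmin [i,j] [ereal a, ereal b] = ereal (real i * a + real j * b)"
  by (simp add: mono_Rmin numeral_2_eq_2)

lemma bal_left: "fst a = snd a \<Longrightarrow> fst (smul SM a m) = snd (smul SM a m)"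
  by (simp add: Ssym_mul min.commute)

lemma bal_right: "fst m = snd m \<Longrightarrow> fst (smul SM c m) = snd (smul SM c m)"
  by (simp add: Ssym_mul)

lemma bal_mono: "fst e1 = snd e1 \<Longrightarrow> fst (mono_eval SM [Suc k, j] [e1, e2]) = snd (mono_eval SM [Suc k, j] [e1, e2])"
proof -
  assume b: "fst e1 = snd e1"
  have "fst (spow SM e1 (Suc k)) = snd (spow SM e1 (Suc k))"
    unfolding spow_def by (simp del: Ssym_simps) (rule bal_left[OF b])
  then show ?thesis unfolding mono_eval_def by (simp del: Ssym_simps) (rule bal_left)
qed

lemma arith_contra:
  fixes v :: ereal and i j :: nat
  assumes "v \<noteq> -\<infinity>" "v + ereal (real i * 0 + real j * 1) \<le> 0"
    "ereal (-2) \<le> v + ereal (real i * (-1) + real j * (-2))"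
    "ereal 2 \<le> v + ereal (real i * 1 + real j * 2)"
    "i \<ge> 1 \<Longrightarrow> ereal 2 < v + ereal (real i * 1 + real j * 2)"
  shows False
proof (cases v)
  case (real w)
  show False
  proof (cases "i \<ge> 1")
    case True then show False using assms real by simp
  next
    case False then show False using assms real by simp
  qed
qed (use assms in auto)




lemma notFE_min: "\<not> fully_elementary (Symz Rmin)"
proof
  assume fe: "fully_elementary (Symz Rmin)"
  let ?E = "sim_rel Rmin" and ?Q = "Symz Rmin"
  define cls where "cls = (\<lambda>a. ?E `` {a})"
  have hc: "hom_s SM ?Q cls" using homQmin(1) unfolding cls_def .
  have clQ: "\<And>a. a \<in> car SM \<Longrightarrow> cls a \<in> car ?Q"
    unfolding cls_def by (simp add: Symz_def quotientI del: Ssym_simps)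
  define p0 :: "((ereal \<times> ereal) \<times> nat list) list" where "p0 = [((0,\<infinity>),[2,0]), ((0,\<infinity>),[0,2])]"
  define p where "p = map (\<lambda>(c,d). (cls c, d)) p0"
  have sp: "sym_fpoly ?Q 2 p"
    unfolding sym_fpoly_def
  proof (intro conjI allI impI)
    show "is_fpoly ?Q 2 p" using clQ[of "(0,\<infinity>)"] by (simp add: is_fpoly_def p_def p0_def)
  next
    fix \<sigma> :: "nat \<Rightarrow> nat" assume s: "\<sigma> permutes {..<2}"
    have "\<sigma> 0 < 2" "\<sigma> 1 < 2" using permutes_in_image[OF s] by auto
    moreover have "\<sigma> 0 \<noteq> \<sigma> 1" using permutes_inj[OF s] by (metis inj_eq zero_neq_one)
    ultimately have "(\<sigma> 0 = 0 \<and> \<sigma> 1 = 1) \<or> (\<sigma> 0 = 1 \<and> \<sigma> 1 = 0)" by auto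
    then show "mset (map (\<lambda>(c, d). (c, perm_exp 2 \<sigma> d)) p) = mset p"
      by (auto simp: p_def p0_def perm_exp_def upt_rec add_mset_commute)
  qed
  then obtain r where r: "is_fpoly ?Q 2 r" and req: "\<forall>x. length x = 2 \<and> set x \<subseteq> car ?Q \<longrightarrow>
       poly_eval ?Q p x = poly_eval ?Q r (map (\<lambda>j. elem_sym ?Q 2 (Suc j) x) [0..<2])"
    using fe unfolding fully_elementary_def by blast
  define rep where "rep = (\<lambda>A. SOME a. a \<in> car SM \<and> A = cls a)"
  have rep: "\<And>A. A \<in> car ?Q \<Longrightarrow> rep A \<in> car SM \<and> A = cls (rep A)"
  proof -
    fix A assume "A \<in> car ?Q"
    then have "\<exists>a. a \<in> car SM \<and> A = cls a" using carQ unfolding cls_def by blast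
    then show "rep A \<in> car SM \<and> A = cls (rep A)" unfolding rep_def by (rule someI_ex)
  qed
  define r0 where "r0 = map (\<lambda>(c,d). (rep c, d)) r"
  have rc: "\<forall>(c,d)\<in>set r. c \<in> car ?Q \<and> length d = 2" using r by (auto simp: is_fpoly_def)
  have rr: "map (\<lambda>(c,d). (cls c, d)) r0 = r"
    unfolding r0_def map_map by (rule map_idI) (use rc rep in auto)
  have r0c: "\<forall>(c,d)\<in>set r0. c \<in> car SM" using rc rep by (auto simp: r0_def)
  have r0l: "\<forall>(c,d)\<in>set r0. length d = 2" using rc by (auto simp: r0_def)
  have p0c: "\<forall>(c,d)\<in>set p0. c \<in> car SM" by (simp add: p0_def)
  have key: "\<And>P. length P = 2 \<Longrightarrow> set P \<subseteq> car SM \<Longrightarrow>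
     cls (poly_eval SM p0 P) = cls (poly_eval SM r0 (map (\<lambda>j. elem_sym SM 2 (Suc j) P) [0..<2]))"
  proof -
    fix P :: "(ereal \<times> ereal) list" assume lP: "length P = 2" and sP: "set P \<subseteq> car SM"
    let ?Es = "map (\<lambda>j. elem_sym SM 2 (Suc j) P) [0..<2]"
    have xs: "set (map cls P) \<subseteq> car ?Q" using sP clQ by auto
    have sEs: "set ?Es \<subseteq> car SM"
      by (simp only: set_map) (rule image_subsetI, rule elem_car[OF closed_Smin hc lP sP])
    have "cls (poly_eval SM p0 P) = poly_eval ?Q p (map cls P)"
      unfolding p_def by (rule hom_poly[OF closed_Smin hc sP p0c])
    also have "\<dots> = poly_eval ?Q r (map (\<lambda>j. elem_sym ?Q 2 (Suc j) (map cls P)) [0..<2])"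
      using req lP xs by simp
    also have "map (\<lambda>j. elem_sym ?Q 2 (Suc j) (map cls P)) [0..<2] = map cls ?Es"
      using hom_elem[OF closed_Smin hc lP sP] by simp
    also have "poly_eval ?Q r (map cls ?Es) = cls (poly_eval SM r0 ?Es)"
      using hom_poly[OF closed_Smin hc sEs r0c] rr by simp
    finally show "cls (poly_eval SM p0 P) = cls (poly_eval SM r0 ?Es)" .
  qed
  define T where "T = (\<lambda>c d es. smul SM c (mono_eval SM d es))"
  have polyT: "\<And>es. poly_eval SM r0 es = (foldr min (map (\<lambda>(c,d). fst (T c d es)) r0) \<infinity>,
         foldr min (map (\<lambda>(c,d). snd (T c d es)) r0) \<infinity>)"
    unfolding poly_eval_def fold_pair by (simp add: T_def case_prod_unfold comp_def del: Ssym_simps)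
  have pos: "\<And>es z. set es \<subseteq> car SM \<Longrightarrow> cls (poly_eval SM r0 es) = cls (ereal z, \<infinity>) \<Longrightarrow>
      (\<forall>(c,d)\<in>set r0. ereal z \<le> fst (T c d es) \<and> ereal z < snd (T c d es)) \<and>
      (\<exists>(c,d)\<in>set r0. fst (T c d es) = ereal z)"
  proof -
    fix es z assume es: "set es \<subseteq> car SM" and e: "cls (poly_eval SM r0 es) = cls (ereal z, \<infinity>)"
    have "poly_eval SM r0 es \<in> car SM" by (rule poly_car[OF closed_Smin hom_pv es r0c])
    from cls_pos[OF this e[unfolded cls_def]]
    have u: "foldr min (map (\<lambda>(c,d). fst (T c d es)) r0) \<infinity> = ereal z"
            "ereal z < foldr min (map (\<lambda>(c,d). snd (T c d es)) r0) \<infinity>"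
      unfolding polyT by auto
    have A: "\<forall>(c,d)\<in>set r0. ereal z \<le> fst (T c d es) \<and> ereal z < snd (T c d es)"
    proof (intro ballI, clarify)
      fix c d assume cd: "(c,d) \<in> set r0"
      have "foldr min (map (\<lambda>(c,d). fst (T c d es)) r0) \<infinity> \<le> fst (T c d es)"
        by (rule foldr_min_le) (use cd in force)
      moreover have "foldr min (map (\<lambda>(c,d). snd (T c d es)) r0) \<infinity> \<le> snd (T c d es)"
        by (rule foldr_min_le) (use cd in force)
      ultimately show "ereal z \<le> fst (T c d es) \<and> ereal z < snd (T c d es)" using u by auto
    qed
    have "ereal z \<in> insert \<infinity> (set (map (\<lambda>(c,d). fst (T c d es)) r0))"
      using foldr_min_mem[of "map (\<lambda>(c,d). fst (T c d es)) r0"] u(1) by simp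
    then obtain y where "y \<in> set r0" "ereal z = (case y of (c,d) \<Rightarrow> fst (T c d es))" by auto
    moreover obtain c0 d0 where "y = (c0, d0)" by (metis surj_pair)
    ultimately have "(c0,d0) \<in> set r0" "fst (T c0 d0 es) = ereal z" by auto
    then have "\<exists>(c,d)\<in>set r0. fst (T c d es) = ereal z" by blast
    with A show "?thesis es z" by blast
  qed
  have pvT: "\<And>c d es. c \<in> car SM \<Longrightarrow> set es \<subseteq> car SM \<Longrightarrow>
      pv (T c d es) = pv c + mono_eval Rmin d (map pv es)"
  proof -
    fix c d es assume c: "c \<in> car SM" and es: "set es \<subseteq> car SM"
    have m: "mono_eval SM d es \<in> car SM" by (rule mono_car[OF closed_Smin hom_pv es])
    have "pv (T c d es) = pv c + pv (mono_eval SM d es)"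
      using hom_pv c m unfolding hom_s_def T_def by (simp del: Ssym_simps)
    then show "pv (T c d es) = pv c + mono_eval Rmin d (map pv es)"
      using hom_mono[OF closed_Smin hom_pv es] by simp
  qed
  define P1 :: "(ereal \<times> ereal) list" where "P1 = [(ereal (-1),\<infinity>),(\<infinity>,ereal (-1))]"
  define P2 :: "(ereal \<times> ereal) list" where "P2 = [(ereal 1,\<infinity>),(\<infinity>,ereal 1)]"
  define P3 :: "(ereal \<times> ereal) list" where "P3 = [(ereal 0,\<infinity>),(ereal 1,\<infinity>)]"
  define es1 :: "(ereal \<times> ereal) list" where "es1 = [(ereal (-1),ereal (-1)),(\<infinity>,ereal (-2))]"
  define es2 :: "(ereal \<times> ereal) list" where "es2 = [(ereal 1,ereal 1),(\<infinity>,ereal 2)]"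
  define es3 :: "(ereal \<times> ereal) list" where "es3 = [(ereal 0,\<infinity>),(ereal 1,\<infinity>)]"
  have E1: "map (\<lambda>j. elem_sym SM 2 (Suc j) P1) [0..<2] = es1"
    by (simp add: P1_def es1_def elem_sym_def Ssym_add Ssym_mul upt_rec)
  have E2: "map (\<lambda>j. elem_sym SM 2 (Suc j) P2) [0..<2] = es2"
    by (simp add: P2_def es2_def elem_sym_def Ssym_add Ssym_mul upt_rec)
  have E3: "map (\<lambda>j. elem_sym SM 2 (Suc j) P3) [0..<2] = es3"
    by (simp add: P3_def es3_def elem_sym_def Ssym_add Ssym_mul upt_rec)
  have V1: "poly_eval SM p0 P1 = (ereal (-2), \<infinity>)"
    by (simp add: p0_def P1_def poly_eval_def mono_eval_def spow_def Ssym_add Ssym_mul numeral_2_eq_2)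
  have V2: "poly_eval SM p0 P2 = (ereal 2, \<infinity>)"
    by (simp add: p0_def P2_def poly_eval_def mono_eval_def spow_def Ssym_add Ssym_mul numeral_2_eq_2)
  have V3: "poly_eval SM p0 P3 = (ereal 0, \<infinity>)"
    by (simp add: p0_def P3_def poly_eval_def mono_eval_def spow_def Ssym_add Ssym_mul numeral_2_eq_2)
  have s1: "set es1 \<subseteq> car SM" "set es2 \<subseteq> car SM" "set es3 \<subseteq> car SM"
    by (auto simp: es1_def es2_def es3_def)
  have K1: "cls (poly_eval SM r0 es1) = cls (ereal (-2), \<infinity>)"
    using key[of P1] E1 V1 by (simp add: P1_def)
  have K2: "cls (poly_eval SM r0 es2) = cls (ereal 2, \<infinity>)"
    using key[of P2] E2 V2 by (simp add: P2_def)
  have K3: "cls (poly_eval SM r0 es3) = cls (ereal 0, \<infinity>)"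
    using key[of P3] E3 V3 by (simp add: P3_def)
  note A1 = pos[OF s1(1) K1] and A2 = pos[OF s1(2) K2] and A3 = pos[OF s1(3) K3]
  obtain c d where cd: "(c,d) \<in> set r0" "fst (T c d es3) = ereal 0" using A3 by blast
  have c: "c \<in> car SM" using r0c cd by auto
  have ld: "length d = 2" using r0l cd by auto
  then obtain i j where d: "d = [i,j]"
    by (auto simp: numeral_2_eq_2 length_Suc_conv)
  have pv1: "map pv es1 = [ereal (-1), ereal (-2)]" "map pv es2 = [ereal 1, ereal 2]"
    "map pv es3 = [ereal 0, ereal 1]" by (simp_all add: pv_def es1_def es2_def es3_def)
  have vne: "pv c \<noteq> -\<infinity>" using c by (auto simp: pv_def min_def)
  have t3: "pv (T c d es3) \<le> 0" using cd(2) by (simp add: pv_def min_le_iff_disj)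
  have t1: "ereal (-2) \<le> pv (T c d es1)" using A1 cd(1) by (auto simp: pv_def)
  have t2: "ereal 2 \<le> pv (T c d es2)" using A2 cd(1) by (auto simp: pv_def)
  have t2s: "i \<ge> 1 \<Longrightarrow> ereal 2 < pv (T c d es2)"
  proof -
    assume "i \<ge> 1"
    then obtain k where k: "i = Suc k" by (cases i) auto
    have "fst (es2!0) = snd (es2!0)" by (simp add: es2_def)
    then have "fst (mono_eval SM [Suc k, j] [es2!0, es2!1]) = snd (mono_eval SM [Suc k, j] [es2!0, es2!1])"
      by (rule bal_mono)
    then have "fst (T c d es2) = snd (T c d es2)"
      unfolding T_def d k by (simp add: es2_def bal_right del: Ssym_simps)
    then show "ereal 2 < pv (T c d es2)" using A2 cd(1) by (auto simp: pv_def)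
  qed
  show False
    using arith_contra[OF vne, of i j] t1 t2 t2s t3 pvT[OF c s1(1), of d] pvT[OF c s1(2), of d]
      pvT[OF c s1(3), of d] pv1 d
    by (simp add: mono_Rmin2)
qed


theorem theorem7p1:
  shows "fully_elementary Rmin \<and> fully_elementary Rmax \<and>
         \<not> fully_elementary (Symz Rmin) \<and> \<not> fully_elementary (Symz Rmax)"
  using FE_Rmin FE_Rmax notFE_min FE_Symz_max_min by blast

end
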